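(* Let $D$ be a tangle diagram with an admissible decorated shadow $\mathrm{SL}_2(\mathbb{C})$-coloring $i\mapsto(g_i,L_i)$, $j\mapsto u_j$. Then the associated coloring $i\mapsto\chi_i=(a_i,b_i,m_i)$ is an octahedral coloring of $D$. That is, it satisfies the following conditions at every crossing. At every crossing, $m_{1'}=m_1$ and $m_{2'}=m_2$. At every positive crossing, with $A=1-\frac{m_1b_1}{b_2}\big(1-\frac{a_1}{m_1}\big)\big(1-\frac{1}{m_2a_2}\big)$, \[ a_{1'}=a_1A^{-1},\quad a_{2'}=a_2A,\quad b_{1'}=\frac{m_2b_2}{m_1}\Big(1-m_2a_2\big(1-\tfrac{b_2}{m_1b_1}\big)\Big)^{-1},\quad b_{2'}=b_1\Big(1-\frac{m_1}{a_1}\big(1-\tfrac{b_2}{m_1b_1}\big)\Big). \] At every negative crossing, with $\tilde A=1-\frac{b_2}{m_1b_1}(1-m_1a_1)\big(1-\frac{m_2}{a_2}\big)$, \[ a_{1'}=a_1\tilde A^{-1},\quad a_{2'}=a_2\tilde A,\quad b_{1'}=\frac{m_2b_2}{m_1}\Big(1-\frac{a_2}{m_2}\big(1-\tfrac{m_1b_1}{b_2}\big)\Big),\quad b_{2'}=b_1\Big(1-\frac{1}{m_1a_1}\big(1-\tfrac{m_1b_1}{b_2}\big)\Big)^{-1}. \]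
   Context: Tangle diagrams: a tangle diagram $D$ is an oriented tangle diagram in $[0,1]^2$, viewed as a 4-valent graph with crossings. Segments are the edges of the graph; a strand is cut at every crossing, over or under. Regions are the components of the complement of the graph in the square. Above and below: for a segment $i$, $i^{\uparrow}$ is the region on the left of $i$ with respect to its orientation and $i^{\downarrow}$ the region on its right. Crossing labels: rotate a crossing so both strands point right. The incoming segments are $1$ (upper left) and $2$ (lower left). The outgoing segments are $1'$ (lower right, continuing $1$) and $2'$ (upper right, continuing $2$). The crossing is positive if strand $1\to1'$ is over, negative if strand $2\to2'$ is over. Decorated $\mathrm{SL}_2(\mathbb{C})$-coloring: assign to each segment $i$ a matrix $g_i\in\mathrm{SL}_2(\mathbb{C})$ and a line $L_i\subset\mathbb{C}^2$ of row vectors with $L_ig_i=L_i$, such that: - at positive crossings, $g_{1'}=g_1$, $g_{2'}=g_1^{-1}g_2g_1$, $L_{1'}=L_1$ and $L_{2'}=L_2g_1$; - at negative crossings, $g_{2'}=g_2$, $g_{1'}=g_2g_1g_2^{-1}$, $L_{2'}=L_2$ and $L_{1'}=L_1g_2^{-1}$. Shadow coloring: nonzero column vectors $u_j\in\mathbb{C}^2$ for regions, with $u_{i^{\downarrow}}=g_iu_{i^{\uparrow}}$ for every segment $i$. Admissibility: write $e_2=(0,1)^T$ and $\det(x,y)$ for the determinant of the matrix with columns $x,y$. For each segment choose nonzero $v_i\in L_i$ and define $m_i$ by $v_ig_i=m_i^{-1}v_i$. The coloring is admissible if $\det(u_j,e_2)\ne0$ for all regions $j$ and $v_ie_2\ne0$,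 $v_iu_{i^{\uparrow}}\neq 0$ for all segments $i$. Associated coloring: $\chi_i=\big(\det(u_{i^{\downarrow}},e_2)/\det(u_{i^{\uparrow}},e_2),\ -v_ie_2/(v_iu_{i^{\uparrow}}),\ m_i\big)$. Octahedral coloring: an assignment of a triple $(a_i,b_i,m_i)$ of nonzero complex numbers to each segment satisfying the displayed relations at each crossing. *)

theory Defs
  imports "HOL-Analysis.Analysis"
begin

text \<open>For a crossing c (rotated so both strands point right), in1 = segment 1 (upper left),
  in2 = segment 2 (lower left), out1 = segment 1' (lower right, continuing 1),
  out2 = segment 2' (upper right, continuing 2).  pos c: the crossing is positive.
  above s = the region on the left of s, below s = the region on its right.\<close>

record ('s, 'r, 'c) tangle_diagram =
  segs :: "'s set"
  regs :: "'r set"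
  crossings :: "'c set"
  pos :: "'c \<Rightarrow> bool"
  in1 :: "'c \<Rightarrow> 's"
  in2 :: "'c \<Rightarrow> 's"
  out1 :: "'c \<Rightarrow> 's"
  out2 :: "'c \<Rightarrow> 's"
  above :: "'s \<Rightarrow> 'r"
  below :: "'s \<Rightarrow> 'r"

text \<open>The four regions around a crossing are: top = 1^up = 2'^up, left = 1^down = 2^up,
  bottom = 2^down = 1'^down, right = 1'^up = 2'^down.\<close>

definition wf_diagram :: "('s, 'r, 'c, 'z) tangle_diagram_scheme \<Rightarrow> bool" where
  "wf_diagram D \<longleftrightarrow>
     finite (segs D) \<and> finite (regs D) \<and> finite (crossings D) \<and>
     (\<forall>i\<in>segs D. above D i \<in> regs D \<and> below D i \<in> regs D) \<and>
     (\<forall>c\<in>crossings D.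
        in1 D c \<in> segs D \<and> in2 D c \<in> segs D \<and> out1 D c \<in> segs D \<and> out2 D c \<in> segs D \<and>
        above D (in1 D c) = above D (out2 D c) \<and>
        below D (in1 D c) = above D (in2 D c) \<and>
        below D (in2 D c) = below D (out1 D c) \<and>
        above D (out1 D c) = below D (out2 D c))"

definition e2 :: "complex^2" where
  "e2 = (\<chi> k. if k = 2 then 1 else 0)"

definition det_cols :: "complex^2 \<Rightarrow> complex^2 \<Rightarrow> complex" where
  "det_cols x y = det (\<chi> r c. if c = 1 then x $ r else y $ r)"

definition rowcol :: "complex^2 \<Rightarrow> complex^2 \<Rightarrow> complex" where
  "rowcol v u = (\<Sum>k\<in>UNIV. v $ k * u $ k)"

definition is_line :: "(complex^2) set \<Rightarrow> bool" where
  "is_line L \<longleftrightarrow> (\<exists>w. w \<noteq> 0 \<and> L = {c *s w | c. True})"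

definition decorated_coloring ::
  "('s, 'r, 'c, 'z) tangle_diagram_scheme \<Rightarrow> ('s \<Rightarrow> complex^2^2) \<Rightarrow> ('s \<Rightarrow> (complex^2) set) \<Rightarrow> bool" where
  "decorated_coloring D g L \<longleftrightarrow>
     (\<forall>i\<in>segs D. det (g i) = 1 \<and> is_line (L i) \<and> (\<lambda>v. v v* g i) ` L i = L i) \<and>
     (\<forall>c\<in>crossings D.
        (pos D c \<longrightarrow>
           g (out1 D c) = g (in1 D c) \<and>
           g (out2 D c) = matrix_inv (g (in1 D c)) ** g (in2 D c) ** g (in1 D c) \<and>
           L (out1 D c) = L (in1 D c) \<and>
           L (out2 D c) = (\<lambda>v. v v* g (in1 D c)) ` L (in2 D c)) \<and>
        (\<not> pos D c \<longrightarrow>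
           g (out2 D c) = g (in2 D c) \<and>
           g (out1 D c) = g (in2 D c) ** g (in1 D c) ** matrix_inv (g (in2 D c)) \<and>
           L (out2 D c) = L (in2 D c) \<and>
           L (out1 D c) = (\<lambda>v. v v* matrix_inv (g (in2 D c))) ` L (in1 D c)))"

definition shadow_coloring ::
  "('s, 'r, 'c, 'z) tangle_diagram_scheme \<Rightarrow> ('s \<Rightarrow> complex^2^2) \<Rightarrow> ('r \<Rightarrow> complex^2) \<Rightarrow> bool" where
  "shadow_coloring D g u \<longleftrightarrow>
     (\<forall>j\<in>regs D. u j \<noteq> 0) \<and>
     (\<forall>i\<in>segs D. u (below D i) = g i *v u (above D i))"

definition admissible ::
  "('s, 'r, 'c, 'z) tangle_diagram_scheme \<Rightarrow> ('r \<Rightarrow> complex^2) \<Rightarrow> ('s \<Rightarrow> complex^2) \<Rightarrow> bool" where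
  "admissible D u v \<longleftrightarrow>
     (\<forall>j\<in>regs D. det_cols (u j) e2 \<noteq> 0) \<and>
     (\<forall>i\<in>segs D. rowcol (v i) e2 \<noteq> 0 \<and> rowcol (v i) (u (above D i)) \<noteq> 0)"

text \<open>Components a_i, b_i of the associated coloring (m_i is given separately).\<close>
definition assoc_a ::
  "('s, 'r, 'c, 'z) tangle_diagram_scheme \<Rightarrow> ('r \<Rightarrow> complex^2) \<Rightarrow> 's \<Rightarrow> complex" where
  "assoc_a D u i = det_cols (u (below D i)) e2 / det_cols (u (above D i)) e2"

definition assoc_b ::
  "('s, 'r, 'c, 'z) tangle_diagram_scheme \<Rightarrow> ('r \<Rightarrow> complex^2) \<Rightarrow> ('s \<Rightarrow> complex^2) \<Rightarrow> 's \<Rightarrow> complex" where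
  "assoc_b D u v i = - rowcol (v i) e2 / rowcol (v i) (u (above D i))"

definition octahedral_coloring ::
  "('s, 'r, 'c, 'z) tangle_diagram_scheme \<Rightarrow> ('s \<Rightarrow> complex) \<Rightarrow> ('s \<Rightarrow> complex) \<Rightarrow> ('s \<Rightarrow> complex) \<Rightarrow> bool" where
  "octahedral_coloring D a b m \<longleftrightarrow>
     (\<forall>i\<in>segs D. a i \<noteq> 0 \<and> b i \<noteq> 0 \<and> m i \<noteq> 0) \<and>
     (\<forall>c\<in>crossings D.
        (let a1 = a (in1 D c); a2 = a (in2 D c); a1' = a (out1 D c); a2' = a (out2 D c);
             b1 = b (in1 D c); b2 = b (in2 D c); b1' = b (out1 D c); b2' = b (out2 D c);
             m1 = m (in1 D c); m2 = m (in2 D c); m1' = m (out1 D c); m2' = m (out2 D c)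
         in m1' = m1 \<and> m2' = m2 \<and>
            (pos D c \<longrightarrow>
               (let A = 1 - (m1 * b1 / b2) * (1 - a1 / m1) * (1 - 1 / (m2 * a2)) in
                a1' = a1 * inverse A \<and> a2' = a2 * A \<and>
                b1' = (m2 * b2 / m1) * inverse (1 - m2 * a2 * (1 - b2 / (m1 * b1))) \<and>
                b2' = b1 * (1 - (m1 / a1) * (1 - b2 / (m1 * b1))))) \<and>
            (\<not> pos D c \<longrightarrow>
               (let At = 1 - (b2 / (m1 * b1)) * (1 - m1 * a1) * (1 - m2 / a2) in
                a1' = a1 * inverse At \<and> a2' = a2 * At \<and>
                b1' = (m2 * b2 / m1) * (1 - (a2 / m2) * (1 - m1 * b1 / b2)) \<and>
                b2' = b1 * inverse (1 - (1 / (m1 * a1)) * (1 - m1 * b1 / b2))))))"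

end

theory Submission
  imports Defs
begin


lemma vec2_eq: "(x::'a^2) = y \<longleftrightarrow> x$1 = y$1 \<and> x$2 = y$2"
  by (simp add: vec_eq_iff forall_2)

lemma mv_1: "((g::'a::comm_semiring_1^2^2) *v u)$1 = g$1$1 * u$1 + g$1$2 * u$2"
  by (simp add: matrix_vector_mult_def sum_2)
lemma mv_2: "((g::'a::comm_semiring_1^2^2) *v u)$2 = g$2$1 * u$1 + g$2$2 * u$2"
  by (simp add: matrix_vector_mult_def sum_2)
lemma vm_1: "(v v* (g::'a::comm_semiring_1^2^2))$1 = v$1 * g$1$1 + v$2 * g$2$1"
  by (simp add: vector_matrix_mult_def sum_2)
lemma vm_2: "(v v* (g::'a::comm_semiring_1^2^2))$2 = v$1 * g$1$2 + v$2 * g$2$2"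
  by (simp add: vector_matrix_mult_def sum_2)
lemma rowcol_2: "rowcol v u = v$1 * u$1 + v$2 * u$2"
  by (simp add: rowcol_def sum_2)
lemma det_cols_e2: "det_cols x e2 = x$1"
  by (simp add: det_cols_def det_2 e2_def)
lemma e2_c: "e2$1 = 0" "e2$2 = 1" by (simp_all add: e2_def)

lemma rowcol_vm: "rowcol (x v* A) y = rowcol x (A *v y)"
  by (simp add: rowcol_2 vm_1 vm_2 mv_1 mv_2 algebra_simps)
lemma rowcol_smult: "rowcol (k *s x) y = k * rowcol x y"
  by (simp add: rowcol_2 algebra_simps)
lemma vm_smult: "(k *s x) v* (A::complex^2^2) = k *s (x v* A)"
  by (simp add: vec2_eq vm_1 vm_2 algebra_simps)

definition adj2 :: "complex^2^2 \<Rightarrow> complex^2^2" where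
  "adj2 g = (\<chi> i j. if i = 1 \<and> j = 1 then g$2$2 else if i = 1 \<and> j = 2 then - g$1$2
                   else if i = 2 \<and> j = 1 then - g$2$1 else g$1$1)"

lemma adj2_c: "adj2 g $1$1 = g$2$2" "adj2 g $1$2 = - g$1$2" "adj2 g $2$1 = - g$2$1" "adj2 g $2$2 = g$1$1"
  by (simp_all add: adj2_def)

lemma mm_c: "((A::complex^2^2) ** B)$i$j = A$i$1 * B$1$j + A$i$2 * B$2$j"
  by (simp add: matrix_matrix_mult_def sum_2)

lemma mat1_c: "(mat 1 :: complex^2^2)$1$1 = 1" "(mat 1 :: complex^2^2)$1$2 = 0"
   "(mat 1 :: complex^2^2)$2$1 = 0" "(mat 1 :: complex^2^2)$2$2 = 1"
  by (simp_all add: mat_def)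

lemma mat2_eq: "(A::complex^2^2) = B \<longleftrightarrow> A$1$1 = B$1$1 \<and> A$1$2 = B$1$2 \<and> A$2$1 = B$2$1 \<and> A$2$2 = B$2$2"
  by (auto simp add: vec_eq_iff forall_2)

lemma adj2_inv: assumes "det g = 1" shows "g ** adj2 g = mat 1" "adj2 g ** g = mat 1"
  using assms by (simp_all add: mat2_eq mm_c adj2_c mat1_c det_2 algebra_simps)

lemma matrix_inv_2: assumes "det g = 1" shows "matrix_inv g = adj2 g"
proof -
  let ?P = "\<lambda>A'. g ** A' = mat 1 \<and> A' ** g = mat 1"
  have "?P (adj2 g)" using adj2_inv[OF assms] by blast
  then have P: "?P (matrix_inv g)" unfolding matrix_inv_def by (rule someI)
  have "matrix_inv g = matrix_inv g ** (g ** adj2 g)" using adj2_inv[OF assms] by simp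
  also have "\<dots> = adj2 g" using P by (simp add: matrix_mul_assoc)
  finally show ?thesis .
qed

lemma seg:
  fixes g :: "complex^2^2" and v u :: "complex^2"
  assumes "det g = 1" "v v* g = inverse m *s v" "v$2 \<noteq> 0"
  shows "m \<noteq> 0" "(g *v u)$1 = m * u$1 + g$1$2 * (v$1/v$2 * u$1 + u$2)"
    "v$1/v$2 * (g *v u)$1 + (g *v u)$2 = (v$1/v$2*u$1 + u$2)/m"
    "g$2$2 = 1/m - v$1/v$2 * g$1$2" "g$1$1 = m + v$1/v$2 * g$1$2"
proof -
  have d: "g$1$1 * g$2$2 - g$1$2 * g$2$1 = 1" using assms(1) by (simp add: det_2)
  have c1: "v$1 * g$1$1 + v$2 * g$2$1 = inverse m * v$1"
   and c2: "v$1 * g$1$2 + v$2 * g$2$2 = inverse m * v$2"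
    using assms(2) by (simp_all add: vec2_eq vm_1 vm_2)
  show mz: "m \<noteq> 0"
  proof
    assume "m = 0"
    then have "v$1 * g$1$1 + v$2 * g$2$1 = 0" "v$1 * g$1$2 + v$2 * g$2$2 = 0" using c1 c2 by simp_all
    then have "v$2 * (g$1$1 * g$2$2 - g$1$2 * g$2$1) = 0" by algebra
    then show False using d assms(3) by simp
  qed
  show s22: "g$2$2 = 1/m - v$1/v$2 * g$1$2" using c2 assms(3) mz by (simp add: field_simps)
  have s21: "g$2$1 = v$1/v$2 * (1/m - g$1$1)" using c1 assms(3) mz by (simp add: field_simps)
  have "g$1$1 * (1/m - v$1/v$2 * g$1$2) - g$1$2 * (v$1/v$2 * (1/m - g$1$1)) = 1"
    using d s22 s21 by simp
  then show s11: "g$1$1 = m + v$1/v$2 * g$1$2" using mz assms(3) by (simp add: field_simps)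
  show "(g *v u)$1 = m * u$1 + g$1$2 * (v$1/v$2 * u$1 + u$2)"
    by (simp add: mv_1 s11 algebra_simps)
  show "v$1/v$2 * (g *v u)$1 + (g *v u)$2 = (v$1/v$2*u$1 + u$2)/m"
    using mz assms(3) by (simp add: mv_1 mv_2 s11 s21 s22 field_simps)
qed

lemma line_mult: assumes "is_line L" "x \<in> L" "y \<in> L" "x \<noteq> 0" shows "\<exists>k. y = k *s x"
proof -
  obtain w where w: "w \<noteq> 0" "L = {c *s w | c. True}" using assms(1) unfolding is_line_def by blast
  obtain a b where ab: "x = a *s w" "y = b *s w" using assms(2,3) w by blast
  have "a \<noteq> 0" using ab assms(4) by auto
  then have "y = (b / a) *s x" using ab by (simp add: vector_smult_assoc)
  then show ?thesis by blast
qed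


lemma scal_pos:
  fixes m1 m2 X w q f \<tau> xL wLL xB wRR xR a1 a2 a1' a2' b1 b2 b1' b2' :: complex
  assumes nz: "m1 \<noteq> 0" "m2 \<noteq> 0" "X \<noteq> 0" "xL \<noteq> 0" "xB \<noteq> 0" "xR \<noteq> 0" "w \<noteq> 0" "wLL \<noteq> 0" "wRR \<noteq> 0"
  and e: "xL = m1 * X + q * w" "m1 * wLL = w - m1 * \<tau> * xL" "xB = m2 * xL + f * wLL"
     "m2 * wRR = m1 * (wLL + m2 * \<tau> * xB)" "xB = m1 * xR + q * wRR"
  and d: "a1 = xL / X" "a2 = xB / xL" "a1' = xB / xR" "a2' = xR / X"
     "b1 = -1 / w" "b2 = -1 / wLL" "b1' = -1 / wRR" "b2' = - (1/m1 - \<tau> * q) / wLL"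
  shows "let A = 1 - (m1 * b1 / b2) * (1 - a1 / m1) * (1 - 1 / (m2 * a2)) in
                a1' = a1 * inverse A \<and> a2' = a2 * A \<and>
                b1' = (m2 * b2 / m1) * inverse (1 - m2 * a2 * (1 - b2 / (m1 * b1))) \<and>
                b2' = b1 * (1 - (m1 / a1) * (1 - b2 / (m1 * b1)))"
proof -
  define A where "A = 1 - (m1 * b1 / b2) * (1 - a1 / m1) * (1 - 1 / (m2 * a2))"
  have hA: "A = a1 / a1'"
    unfolding A_def d using nz 
    apply (simp add: field_simps)
    using e by algebra
  have hB: "1 - m2 * a2 * (1 - b2 / (m1 * b1)) = (m2 * b2 / m1) / b1'"
    unfolding d using nz 
    apply (simp add: field_simps)
    using e by algebra
  have hC: "b2' = b1 * (1 - (m1 / a1) * (1 - b2 / (m1 * b1)))"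
    unfolding d using nz 
    apply (simp add: field_simps)
    using e by algebra
  have nz2: "a1 \<noteq> 0" "a1' \<noteq> 0" "a2 \<noteq> 0" "b1' \<noteq> 0" "b2 \<noteq> 0" using nz d by auto
  have An: "A \<noteq> 0" using hA nz2 by simp
  have g1: "a1' = a1 * inverse A" using hA nz2 An by (simp add: field_simps)
  have g2: "a2' = a2 * A" unfolding hA d using nz by (simp add: field_simps)
  have g3: "b1' = (m2 * b2 / m1) * inverse (1 - m2 * a2 * (1 - b2 / (m1 * b1)))"
    unfolding hB using nz2 nz by (simp add: field_simps)
  show ?thesis unfolding Let_def A_def[symmetric] using g1 g2 g3 hC by blast
qed
lemma scal_neg:
  fixes m1 m2 X w q f \<tau> xL wLL xB wTT xR a1 a2 a1' a2' b1 b2 b1' b2' :: complex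
  assumes nz: "m1 \<noteq> 0" "m2 \<noteq> 0" "X \<noteq> 0" "xL \<noteq> 0" "xB \<noteq> 0" "xR \<noteq> 0" "w \<noteq> 0" "wLL \<noteq> 0" "wTT \<noteq> 0"
  and e: "xL = m1 * X + q * w" "m1 * wLL = w - m1 * \<tau> * xL" "xB = m2 * xL + f * wLL"
     "wTT = w - \<tau> * X" "xR = m2 * X + f * wTT"
  and d: "a1 = xL / X" "a2 = xB / xL" "a1' = xB / xR" "a2' = xR / X"
     "b1 = -1 / w" "b2 = -1 / wLL" "b1' = - (m2 - \<tau> * f) / w" "b2' = - 1 / wTT"
  shows "let At = 1 - (b2 / (m1 * b1)) * (1 - m1 * a1) * (1 - m2 / a2) in
                a1' = a1 * inverse At \<and> a2' = a2 * At \<and>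
                b1' = (m2 * b2 / m1) * (1 - (a2 / m2) * (1 - m1 * b1 / b2)) \<and>
                b2' = b1 * inverse (1 - (1 / (m1 * a1)) * (1 - m1 * b1 / b2))"
proof -
  define A where "A = 1 - (b2 / (m1 * b1)) * (1 - m1 * a1) * (1 - m2 / a2)"
  have hA: "A = a1 / a1'"
    unfolding A_def d using nz 
    apply (simp add: field_simps)
    using e by algebra
  have hB: "1 - (1 / (m1 * a1)) * (1 - m1 * b1 / b2) = b1 / b2'"
    unfolding d using nz 
    apply (simp add: field_simps)
    using e by algebra
  have hC: "b1' = (m2 * b2 / m1) * (1 - (a2 / m2) * (1 - m1 * b1 / b2))"
    unfolding d using nz 
    apply (simp add: field_simps)
    using e by algebra
  have nz2: "a1 \<noteq> 0" "a1' \<noteq> 0" "a2 \<noteq> 0" "b1 \<noteq> 0" "b2' \<noteq> 0" using nz d by auto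
  have An: "A \<noteq> 0" using hA nz2 by simp
  have g1: "a1' = a1 * inverse A" using hA nz2 An by (simp add: field_simps)
  have g2: "a2' = a2 * A" unfolding hA d using nz by (simp add: field_simps)
  have g3: "b2' = b1 * inverse (1 - (1 / (m1 * a1)) * (1 - m1 * b1 / b2))"
    unfolding hB using nz2 nz by (simp add: field_simps)
  show ?thesis unfolding Let_def A_def[symmetric] using g1 g2 g3 hC by blast
qed


lemma smult_cancel2: assumes "c *s x = d *s (x::complex^2)" "x \<noteq> 0" shows "c = d"
proof -
  have "x$1 \<noteq> 0 \<or> x$2 \<noteq> 0" using assms(2) by (auto simp: vec2_eq)
  then show ?thesis using assms(1) by (auto simp: vec2_eq)
qed

lemma pos_cross:
  fixes gA gB :: "complex^2^2" and vA vB vA' vB' uT uL uB uR :: "complex^2"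
  assumes dg: "det gA = 1" "det gB = 1"
  and ev: "vA v* gA = inverse mA *s vA" "vB v* gB = inverse mB *s vB"
  and ev': "vA' v* gA = inverse mA' *s vA'" "vB' v* (matrix_inv gA ** gB ** gA) = inverse mB' *s vB'"
  and vv: "vA' = kA *s vA" "vB' = kB *s (vB v* gA)"
  and uu: "uL = gA *v uT" "uB = gB *v uL" "uB = gA *v uR"
  and nz: "uT$1 \<noteq> 0" "uL$1 \<noteq> 0" "uB$1 \<noteq> 0" "uR$1 \<noteq> 0" "vA$2 \<noteq> 0" "vB$2 \<noteq> 0"
     "vA' \<noteq> 0" "vB' \<noteq> 0" "rowcol vA uT \<noteq> 0" "rowcol vB uL \<noteq> 0" "rowcol vA' uR \<noteq> 0"
  and d: "aA = det_cols uL e2 / det_cols uT e2" "aB = det_cols uB e2 / det_cols uL e2"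
     "aA' = det_cols uB e2 / det_cols uR e2" "aB' = det_cols uR e2 / det_cols uT e2"
     "bA = - rowcol vA e2 / rowcol vA uT" "bB = - rowcol vB e2 / rowcol vB uL"
     "bA' = - rowcol vA' e2 / rowcol vA' uR" "bB' = - rowcol vB' e2 / rowcol vB' uT"
  shows "mA' = mA \<and> mB' = mB \<and>
    (let A = 1 - (mA * bA / bB) * (1 - aA / mA) * (1 - 1 / (mB * aB)) in
                aA' = aA * inverse A \<and> aB' = aB * A \<and>
                bA' = (mB * bB / mA) * inverse (1 - mB * aB * (1 - bB / (mA * bA))) \<and>
                bB' = bA * (1 - (mA / aA) * (1 - bB / (mA * bA))))"
proof -
  define t1 where "t1 = vA$1 / vA$2"
  define t2 where "t2 = vB$1 / vB$2"
  note S1 = seg(1,4,5)[OF dg(1) ev(1) nz(5), folded t1_def] seg(2,3)[OF dg(1) ev(1) nz(5), where u=uT, folded t1_def uu(1)]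
  note S2 = seg(1,4,5)[OF dg(2) ev(2) nz(6), folded t2_def] seg(2,3)[OF dg(2) ev(2) nz(6), where u=uL, folded t2_def uu(2)]
  note S3 = seg(1,4,5)[OF dg(1) ev(1) nz(5), folded t1_def] seg(2,3)[OF dg(1) ev(1) nz(5), where u=uR, folded t1_def uu(3)]
  have kA: "kA \<noteq> 0" using nz(7) vv(1) by auto
  have kB: "kB \<noteq> 0" using nz(8) vv(2) by auto
  have m1z: "mA \<noteq> 0" and m2z: "mB \<noteq> 0" using S1(1) S2(1) by auto
  have "mA' = mA"
  proof -
    have "inverse mA' *s vA' = inverse mA *s vA'"
      using ev'(1) unfolding vv(1) vm_smult ev(1) by (auto simp add: vector_smult_assoc mult.commute)
    then have "inverse mA' = inverse mA" using smult_cancel2 nz(7) by blast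
    then show ?thesis by simp
  qed
  moreover have "mB' = mB"
  proof -
    have "vB' v* (matrix_inv gA ** gB ** gA) = kB *s ((vB v* gB) v* gA)"
      unfolding vv(2) matrix_inv_2[OF dg(1)] vm_smult
      by (simp add: vector_matrix_mul_assoc matrix_mul_assoc adj2_inv[OF dg(1)])
    also have "\<dots> = inverse mB *s vB'" unfolding ev(2) vv(2) vm_smult by (simp add: vector_smult_assoc mult.commute)
    finally have "inverse mB' = inverse mB" using smult_cancel2 nz(8) ev'(2) by metis
    then show ?thesis by simp
  qed
  moreover have "let A = 1 - (mA * bA / bB) * (1 - aA / mA) * (1 - 1 / (mB * aB)) in
                aA' = aA * inverse A \<and> aB' = aB * A \<and>
                bA' = (mB * bB / mA) * inverse (1 - mB * aB * (1 - bB / (mA * bA))) \<and>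
                bB' = bA * (1 - (mA / aA) * (1 - bB / (mA * bA)))"
  proof (rule scal_pos[where X = "uT$1" and w = "t1 * uT$1 + uT$2" and q = "gA$1$2" and f = "gB$1$2"
      and \<tau> = "t1 - t2" and xL = "uL$1" and wLL = "t2 * uL$1 + uL$2" and xB = "uB$1"
      and wRR = "t1 * uR$1 + uR$2" and xR = "uR$1"])
    show "mA \<noteq> 0" "mB \<noteq> 0" "uT$1 \<noteq> 0" "uL$1 \<noteq> 0" "uB$1 \<noteq> 0" "uR$1 \<noteq> 0" using m1z m2z nz by auto
    show "t1 * uT$1 + uT$2 \<noteq> 0" using nz(5,9) unfolding t1_def rowcol_2 by (auto simp: field_simps)
    show "t2 * uL$1 + uL$2 \<noteq> 0" using nz(6,10) unfolding t2_def rowcol_2 by (auto simp: field_simps)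
    have "rowcol vA uR \<noteq> 0" using nz(11) unfolding vv(1) rowcol_smult by auto
    then show "t1 * uR$1 + uR$2 \<noteq> 0" using nz(5) unfolding t1_def rowcol_2 by (auto simp: field_simps)
    show "uL$1 = mA * uT$1 + gA$1$2 * (t1 * uT$1 + uT$2)" using S1(4) .
    show "mA * (t2 * uL$1 + uL$2) = t1 * uT$1 + uT$2 - mA * (t1 - t2) * uL$1"
      using S1(5) m1z by (simp add: field_simps)
    show "uB$1 = mB * uL$1 + gB$1$2 * (t2 * uL$1 + uL$2)" using S2(4) .
    show "mB * (t1 * uR$1 + uR$2) = mA * (t2 * uL$1 + uL$2 + mB * (t1 - t2) * uB$1)"
      using S2(5) S3(5) m1z m2z apply (simp add: field_simps) by algebra
    show "uB$1 = mA * uR$1 + gA$1$2 * (t1 * uR$1 + uR$2)" using S3(4) .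
    show "aA = uL$1 / uT$1" "aB = uB$1 / uL$1" "aA' = uB$1 / uR$1" "aB' = uR$1 / uT$1"
      using d by (simp_all add: det_cols_e2)
    show "bA = -1 / (t1 * uT$1 + uT$2)" using d(5) nz(5) unfolding t1_def rowcol_2 by (simp add: e2_c field_simps)
    show "bB = -1 / (t2 * uL$1 + uL$2)" using d(6) nz(6) unfolding t2_def rowcol_2 by (simp add: e2_c field_simps)
    have "bA' = - rowcol vA e2 / rowcol vA uR" using d(7) kA unfolding vv(1) rowcol_smult by simp
    then show "bA' = -1 / (t1 * uR$1 + uR$2)" using nz(5) unfolding t1_def rowcol_2 by (simp add: e2_c field_simps)
    have r1: "rowcol vB' e2 = kB * vB$2 * (1/mA - (t1 - t2) * gA$1$2)"
      unfolding vv(2) rowcol_smult rowcol_2 using nz(6) m1z by (simp add: e2_c vm_2 t2_def S1(2) field_simps)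
    have r2: "rowcol vB' uT = kB * vB$2 * (t2 * uL$1 + uL$2)"
      unfolding vv(2) rowcol_smult rowcol_vm uu(1)[symmetric] unfolding rowcol_2 using nz(6) by (simp add: t2_def field_simps)
    show "bB' = - (1/mA - (t1 - t2) * gA$1$2) / (t2 * uL$1 + uL$2)"
      unfolding d(8) r1 r2 using kB nz(6) apply simp by (metis minus_divide_left minus_diff_eq)
  qed
  ultimately show ?thesis by blast
qed

lemma neg_cross:
  fixes gA gB :: "complex^2^2" and vA vB vA' vB' uT uL uB uR :: "complex^2"
  assumes dg: "det gA = 1" "det gB = 1"
  and ev: "vA v* gA = inverse mA *s vA" "vB v* gB = inverse mB *s vB"
  and ev': "vA' v* (gB ** gA ** matrix_inv gB) = inverse mA' *s vA'" "vB' v* gB = inverse mB' *s vB'"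
  and vv: "vA' = kA *s (vA v* matrix_inv gB)" "vB' = kB *s vB"
  and uu: "uL = gA *v uT" "uB = gB *v uL" "uR = gB *v uT"
  and nz: "uT$1 \<noteq> 0" "uL$1 \<noteq> 0" "uB$1 \<noteq> 0" "uR$1 \<noteq> 0" "vA$2 \<noteq> 0" "vB$2 \<noteq> 0"
     "vA' \<noteq> 0" "vB' \<noteq> 0" "rowcol vA uT \<noteq> 0" "rowcol vB uL \<noteq> 0" "rowcol vB' uT \<noteq> 0"
  and d: "aA = det_cols uL e2 / det_cols uT e2" "aB = det_cols uB e2 / det_cols uL e2"
     "aA' = det_cols uB e2 / det_cols uR e2" "aB' = det_cols uR e2 / det_cols uT e2"
     "bA = - rowcol vA e2 / rowcol vA uT" "bB = - rowcol vB e2 / rowcol vB uL"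
     "bA' = - rowcol vA' e2 / rowcol vA' uR" "bB' = - rowcol vB' e2 / rowcol vB' uT"
  shows "mA' = mA \<and> mB' = mB \<and>
    (let At = 1 - (bB / (mA * bA)) * (1 - mA * aA) * (1 - mB / aB) in
                aA' = aA * inverse At \<and> aB' = aB * At \<and>
                bA' = (mB * bB / mA) * (1 - (aB / mB) * (1 - mA * bA / bB)) \<and>
                bB' = bA * inverse (1 - (1 / (mA * aA)) * (1 - mA * bA / bB)))"
proof -
  define t1 where "t1 = vA$1 / vA$2"
  define t2 where "t2 = vB$1 / vB$2"
  note S1 = seg(1,4,5)[OF dg(1) ev(1) nz(5), folded t1_def] seg(2,3)[OF dg(1) ev(1) nz(5), where u=uT, folded t1_def uu(1)]
  note S2 = seg(1,4,5)[OF dg(2) ev(2) nz(6), folded t2_def] seg(2,3)[OF dg(2) ev(2) nz(6), where u=uL, folded t2_def uu(2)]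
  note S3 = seg(2,3)[OF dg(2) ev(2) nz(6), where u=uT, folded t2_def uu(3)]
  have kA: "kA \<noteq> 0" using nz(7) vv(1) by auto
  have kB: "kB \<noteq> 0" using nz(8) vv(2) by auto
  have m1z: "mA \<noteq> 0" and m2z: "mB \<noteq> 0" using S1(1) S2(1) by auto
  have "mB' = mB"
  proof -
    have "inverse mB' *s vB' = inverse mB *s vB'"
      using ev'(2) unfolding vv(2) vm_smult ev(2) by (auto simp add: vector_smult_assoc mult.commute)
    then have "inverse mB' = inverse mB" using smult_cancel2 nz(8) by blast
    then show ?thesis by simp
  qed
  moreover have "mA' = mA"
  proof -
    have "vA' v* (gB ** gA ** matrix_inv gB) = kA *s ((vA v* gA) v* matrix_inv gB)"
      unfolding vv(1) matrix_inv_2[OF dg(2)] vm_smult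
      by (simp add: vector_matrix_mul_assoc matrix_mul_assoc adj2_inv[OF dg(2)])
    also have "\<dots> = inverse mA *s vA'" unfolding ev(1) vv(1) vm_smult by (simp add: vector_smult_assoc mult.commute)
    finally have "inverse mA' = inverse mA" using smult_cancel2 nz(7) ev'(1) by metis
    then show ?thesis by simp
  qed
  moreover have "let At = 1 - (bB / (mA * bA)) * (1 - mA * aA) * (1 - mB / aB) in
                aA' = aA * inverse At \<and> aB' = aB * At \<and>
                bA' = (mB * bB / mA) * (1 - (aB / mB) * (1 - mA * bA / bB)) \<and>
                bB' = bA * inverse (1 - (1 / (mA * aA)) * (1 - mA * bA / bB))"
  proof (rule scal_neg[where X = "uT$1" and w = "t1 * uT$1 + uT$2" and q = "gA$1$2" and f = "gB$1$2"
      and \<tau> = "t1 - t2" and xL = "uL$1" and wLL = "t2 * uL$1 + uL$2" and xB = "uB$1"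
      and wTT = "t2 * uT$1 + uT$2" and xR = "uR$1"])
    show "mA \<noteq> 0" "mB \<noteq> 0" "uT$1 \<noteq> 0" "uL$1 \<noteq> 0" "uB$1 \<noteq> 0" "uR$1 \<noteq> 0" using m1z m2z nz by auto
    show "t1 * uT$1 + uT$2 \<noteq> 0" using nz(5,9) unfolding t1_def rowcol_2 by (auto simp: field_simps)
    show "t2 * uL$1 + uL$2 \<noteq> 0" using nz(6,10) unfolding t2_def rowcol_2 by (auto simp: field_simps)
    have "rowcol vB uT \<noteq> 0" using nz(11) unfolding vv(2) rowcol_smult by auto
    then show "t2 * uT$1 + uT$2 \<noteq> 0" using nz(6) unfolding t2_def rowcol_2 by (auto simp: field_simps)
    show "uL$1 = mA * uT$1 + gA$1$2 * (t1 * uT$1 + uT$2)" using S1(4) .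
    show "mA * (t2 * uL$1 + uL$2) = t1 * uT$1 + uT$2 - mA * (t1 - t2) * uL$1"
      using S1(5) m1z by (simp add: field_simps)
    show "uB$1 = mB * uL$1 + gB$1$2 * (t2 * uL$1 + uL$2)" using S2(4) .
    show "t2 * uT$1 + uT$2 = t1 * uT$1 + uT$2 - (t1 - t2) * uT$1" by (simp add: algebra_simps)
    show "uR$1 = mB * uT$1 + gB$1$2 * (t2 * uT$1 + uT$2)" using S3(1) .
    show "aA = uL$1 / uT$1" "aB = uB$1 / uL$1" "aA' = uB$1 / uR$1" "aB' = uR$1 / uT$1"
      using d by (simp_all add: det_cols_e2)
    show "bA = -1 / (t1 * uT$1 + uT$2)" using d(5) nz(5) unfolding t1_def rowcol_2 by (simp add: e2_c field_simps)
    show "bB = -1 / (t2 * uL$1 + uL$2)" using d(6) nz(6) unfolding t2_def rowcol_2 by (simp add: e2_c field_simps)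
    have "bB' = - rowcol vB e2 / rowcol vB uT" using d(8) kB unfolding vv(2) rowcol_smult by simp
    then show "bB' = -1 / (t2 * uT$1 + uT$2)" using nz(6) unfolding t2_def rowcol_2 by (simp add: e2_c field_simps)
    have r1: "rowcol vA' e2 = kA * vA$2 * (mB - (t1 - t2) * gB$1$2)"
      unfolding vv(1) rowcol_smult rowcol_2 matrix_inv_2[OF dg(2)] using nz(5) m2z
      by (simp add: e2_c vm_2 adj2_c t1_def S2(3) field_simps)
    have r2: "rowcol vA' uR = kA * vA$2 * (t1 * uT$1 + uT$2)"
      unfolding vv(1) rowcol_smult rowcol_vm uu(3) matrix_inv_2[OF dg(2)]
      unfolding matrix_vector_mul_assoc adj2_inv[OF dg(2)] matrix_vector_mul_lid
      unfolding rowcol_2 using nz(5) by (simp add: t1_def field_simps)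
    show "bA' = - (mB - (t1 - t2) * gB$1$2) / (t1 * uT$1 + uT$2)"
      unfolding d(7) r1 r2 using kA nz(5) apply simp by (metis minus_divide_left minus_diff_eq)
  qed
  ultimately show ?thesis by blast
qed



theorem theorem2p11:
  fixes D :: "('s, 'r, 'c) tangle_diagram"
    and g :: "'s \<Rightarrow> complex^2^2" and L :: "'s \<Rightarrow> (complex^2) set"
    and u :: "'r \<Rightarrow> complex^2" and v :: "'s \<Rightarrow> complex^2" and m :: "'s \<Rightarrow> complex"
  assumes "wf_diagram D"
    and "decorated_coloring D g L"
    and "shadow_coloring D g u"
    and "\<forall>i\<in>segs D. v i \<in> L i \<and> v i \<noteq> 0"
    and "\<forall>i\<in>segs D. v i v* g i = inverse (m i) *s v i"
    and "admissible D u v"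
  shows "octahedral_coloring D (assoc_a D u) (assoc_b D u v) m"
proof -
  note wf = assms(1)[unfolded wf_diagram_def]
  note dc = assms(2)[unfolded decorated_coloring_def]
  note sh = assms(3)[unfolded shadow_coloring_def]
  note adm = assms(6)[unfolded admissible_def]
  have segreg: "above D i \<in> regs D" "below D i \<in> regs D" if "i \<in> segs D" for i
    using wf that by auto
  have dnz: "(u j)$1 \<noteq> 0" if "j \<in> regs D" for j using adm that by (simp add: det_cols_e2)
  have v2nz: "(v i)$2 \<noteq> 0" if "i \<in> segs D" for i using adm that by (simp add: rowcol_2 e2_c)
  have rnz: "rowcol (v i) (u (above D i)) \<noteq> 0" if "i \<in> segs D" for i using adm that by simp
  have detg: "det (g i) = 1" if "i \<in> segs D" for i using dc that by simp
  have isl: "is_line (L i)" if "i \<in> segs D" for i using dc that by simp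
  have vL: "v i \<in> L i" "v i \<noteq> 0" if "i \<in> segs D" for i using assms(4) that by auto
  have ev: "v i v* g i = inverse (m i) *s v i" if "i \<in> segs D" for i using assms(5) that by auto
  have shu: "u (below D i) = g i *v u (above D i)" if "i \<in> segs D" for i using sh that by auto
  show ?thesis unfolding octahedral_coloring_def
  proof (intro conjI ballI)
    fix i assume i: "i \<in> segs D"
    show "assoc_a D u i \<noteq> 0" unfolding assoc_a_def det_cols_e2 using dnz segreg i by simp
    show "assoc_b D u v i \<noteq> 0" unfolding assoc_b_def using adm i by simp
    show "m i \<noteq> 0" using seg(1)[OF detg[OF i] ev[OF i] v2nz[OF i]] .
  next
    fix c assume c: "c \<in> crossings D"
    define i1 where "i1 = in1 D c"
    define i2 where "i2 = in2 D c"
    define o1 where "o1 = out1 D c"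
    define o2 where "o2 = out2 D c"
    have S: "i1 \<in> segs D" "i2 \<in> segs D" "o1 \<in> segs D" "o2 \<in> segs D"
      using wf c unfolding i1_def i2_def o1_def o2_def by auto
    have R: "above D i1 = above D o2" "below D i1 = above D i2" "below D i2 = below D o1"
        "above D o1 = below D o2"
      using wf c unfolding i1_def i2_def o1_def o2_def by auto
    have dcc: "(pos D c \<longrightarrow>
           g o1 = g i1 \<and> g o2 = matrix_inv (g i1) ** g i2 ** g i1 \<and>
           L o1 = L i1 \<and> L o2 = (\<lambda>v. v v* g i1) ` L i2) \<and>
        (\<not> pos D c \<longrightarrow>
           g o2 = g i2 \<and> g o1 = g i2 ** g i1 ** matrix_inv (g i2) \<and>
           L o2 = L i2 \<and> L o1 = (\<lambda>v. v v* matrix_inv (g i2)) ` L i1)"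
      using dc c unfolding i1_def i2_def o1_def o2_def by blast
    define uT where "uT = u (above D i1)"
    define uL where "uL = u (below D i1)"
    define uB where "uB = u (below D i2)"
    define uR where "uR = u (above D o1)"
    have da: "assoc_a D u i1 = det_cols uL e2 / det_cols uT e2"
       "assoc_a D u i2 = det_cols uB e2 / det_cols uL e2"
       "assoc_a D u o1 = det_cols uB e2 / det_cols uR e2"
       "assoc_a D u o2 = det_cols uR e2 / det_cols uT e2"
      unfolding assoc_a_def uT_def uL_def uB_def uR_def R by simp_all
    have db: "assoc_b D u v i1 = - rowcol (v i1) e2 / rowcol (v i1) uT"
       "assoc_b D u v i2 = - rowcol (v i2) e2 / rowcol (v i2) uL"
       "assoc_b D u v o1 = - rowcol (v o1) e2 / rowcol (v o1) uR"
       "assoc_b D u v o2 = - rowcol (v o2) e2 / rowcol (v o2) uT"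
      unfolding assoc_b_def uT_def uL_def uB_def uR_def R by simp_all
    have nzu: "uT$1 \<noteq> 0" "uL$1 \<noteq> 0" "uB$1 \<noteq> 0" "uR$1 \<noteq> 0"
      unfolding uT_def uL_def uB_def uR_def using dnz segreg S by auto
    have nzr: "rowcol (v i1) uT \<noteq> 0" "rowcol (v i2) uL \<noteq> 0" "rowcol (v o1) uR \<noteq> 0"
        "rowcol (v o2) uT \<noteq> 0"
      unfolding uT_def uL_def uR_def using rnz[OF S(1)] rnz[OF S(2)] rnz[OF S(3)] rnz[OF S(4)]
      by (simp_all add: R(1) R(2))
    have uu: "uL = g i1 *v uT" "uB = g i2 *v uL"
      unfolding uT_def uL_def uB_def using shu[OF S(1)] shu[OF S(2)] unfolding R(2)[symmetric] by simp_all
    have uo1: "uB = g o1 *v uR" unfolding uB_def uR_def R(3) using shu[OF S(3)] by simp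
    have uo2: "uR = g o2 *v uT" unfolding uT_def uR_def R(4) R(1) using shu[OF S(4)] by simp
    show "let a1 = assoc_a D u (in1 D c); a2 = assoc_a D u (in2 D c); a1' = assoc_a D u (out1 D c); a2' = assoc_a D u (out2 D c);
             b1 = assoc_b D u v (in1 D c); b2 = assoc_b D u v (in2 D c); b1' = assoc_b D u v (out1 D c); b2' = assoc_b D u v (out2 D c);
             m1 = m (in1 D c); m2 = m (in2 D c); m1' = m (out1 D c); m2' = m (out2 D c)
         in m1' = m1 \<and> m2' = m2 \<and>
            (pos D c \<longrightarrow>
               (let A = 1 - (m1 * b1 / b2) * (1 - a1 / m1) * (1 - 1 / (m2 * a2)) in
                a1' = a1 * inverse A \<and> a2' = a2 * A \<and>
                b1' = (m2 * b2 / m1) * inverse (1 - m2 * a2 * (1 - b2 / (m1 * b1))) \<and>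
                b2' = b1 * (1 - (m1 / a1) * (1 - b2 / (m1 * b1))))) \<and>
            (\<not> pos D c \<longrightarrow>
               (let At = 1 - (b2 / (m1 * b1)) * (1 - m1 * a1) * (1 - m2 / a2) in
                a1' = a1 * inverse At \<and> a2' = a2 * At \<and>
                b1' = (m2 * b2 / m1) * (1 - (a2 / m2) * (1 - m1 * b1 / b2)) \<and>
                b2' = b1 * inverse (1 - (1 / (m1 * a1)) * (1 - m1 * b1 / b2))))"
    proof (cases "pos D c")
      case True
      note G = dcc[THEN conjunct1, rule_format, OF True]
      obtain k1 where k1: "v o1 = k1 *s v i1"
        using line_mult[OF isl[OF S(1)] vL(1)[OF S(1)] _ vL(2)[OF S(1)], of "v o1"] vL(1)[OF S(3)] G
        by metis
      obtain z where z: "z \<in> L i2" "v o2 = z v* g i1" using vL(1)[OF S(4)] G by auto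
      obtain k2 where k2: "z = k2 *s v i2"
        using line_mult[OF isl[OF S(2)] vL(1)[OF S(2)] z(1) vL(2)[OF S(2)]] by metis
      have H: "m o1 = m i1 \<and> m o2 = m i2 \<and>
        (let A = 1 - (m i1 * assoc_b D u v i1 / assoc_b D u v i2) * (1 - assoc_a D u i1 / m i1) * (1 - 1 / (m i2 * assoc_a D u i2)) in
                assoc_a D u o1 = assoc_a D u i1 * inverse A \<and> assoc_a D u o2 = assoc_a D u i2 * A \<and>
                assoc_b D u v o1 = (m i2 * assoc_b D u v i2 / m i1) * inverse (1 - m i2 * assoc_a D u i2 * (1 - assoc_b D u v i2 / (m i1 * assoc_b D u v i1))) \<and>
                assoc_b D u v o2 = assoc_b D u v i1 * (1 - (m i1 / assoc_a D u i1) * (1 - assoc_b D u v i2 / (m i1 * assoc_b D u v i1))))"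
      proof (rule pos_cross[where gA = "g i1" and gB = "g i2" and vA = "v i1" and vB = "v i2"
          and vA' = "v o1" and vB' = "v o2" and kA = k1 and kB = k2 and uT = uT and uL = uL and uB = uB and uR = uR])
        show "det (g i1) = 1" "det (g i2) = 1" using detg S by auto
        show "v i1 v* g i1 = inverse (m i1) *s v i1" "v i2 v* g i2 = inverse (m i2) *s v i2" using ev S by auto
        show "v o1 v* g i1 = inverse (m o1) *s v o1" using ev[OF S(3)] G by simp
        show "v o2 v* (matrix_inv (g i1) ** g i2 ** g i1) = inverse (m o2) *s v o2" using ev[OF S(4)] G by simp
        show "v o1 = k1 *s v i1" by (rule k1)
        show "v o2 = k2 *s (v i2 v* g i1)" using z(2) k2 vm_smult by simp
        show "uL = g i1 *v uT" "uB = g i2 *v uL" by (rule uu)+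
        show "uB = g i1 *v uR" using uo1 G by simp
        show "uT$1 \<noteq> 0" "uL$1 \<noteq> 0" "uB$1 \<noteq> 0" "uR$1 \<noteq> 0" by (rule nzu)+
        show "v i1 $ 2 \<noteq> 0" "v i2 $ 2 \<noteq> 0" using v2nz S by auto
        show "v o1 \<noteq> 0" "v o2 \<noteq> 0" using vL S by auto
        show "rowcol (v i1) uT \<noteq> 0" "rowcol (v i2) uL \<noteq> 0" "rowcol (v o1) uR \<noteq> 0" by (rule nzr)+
      qed (rule da db)+
      show ?thesis using H True unfolding Let_def i1_def i2_def o1_def o2_def by simp
    next
      case False
      note G = dcc[THEN conjunct2, rule_format, OF False]
      obtain k2 where k2: "v o2 = k2 *s v i2"
        using line_mult[OF isl[OF S(2)] vL(1)[OF S(2)] _ vL(2)[OF S(2)], of "v o2"] vL(1)[OF S(4)] G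
        by metis
      obtain z where z: "z \<in> L i1" "v o1 = z v* matrix_inv (g i2)" using vL(1)[OF S(3)] G by auto
      obtain k1 where k1: "z = k1 *s v i1"
        using line_mult[OF isl[OF S(1)] vL(1)[OF S(1)] z(1) vL(2)[OF S(1)]] by metis
      have H: "m o1 = m i1 \<and> m o2 = m i2 \<and>
        (let At = 1 - (assoc_b D u v i2 / (m i1 * assoc_b D u v i1)) * (1 - m i1 * assoc_a D u i1) * (1 - m i2 / assoc_a D u i2) in
                assoc_a D u o1 = assoc_a D u i1 * inverse At \<and> assoc_a D u o2 = assoc_a D u i2 * At \<and>
                assoc_b D u v o1 = (m i2 * assoc_b D u v i2 / m i1) * (1 - (assoc_a D u i2 / m i2) * (1 - m i1 * assoc_b D u v i1 / assoc_b D u v i2)) \<and>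
                assoc_b D u v o2 = assoc_b D u v i1 * inverse (1 - (1 / (m i1 * assoc_a D u i1)) * (1 - m i1 * assoc_b D u v i1 / assoc_b D u v i2)))"
      proof (rule neg_cross[where gA = "g i1" and gB = "g i2" and vA = "v i1" and vB = "v i2"
          and vA' = "v o1" and vB' = "v o2" and kA = k1 and kB = k2 and uT = uT and uL = uL and uB = uB and uR = uR])
        show "det (g i1) = 1" "det (g i2) = 1" using detg S by auto
        show "v i1 v* g i1 = inverse (m i1) *s v i1" "v i2 v* g i2 = inverse (m i2) *s v i2" using ev S by auto
        show "v o2 v* g i2 = inverse (m o2) *s v o2" using ev[OF S(4)] G by simp
        show "v o1 v* (g i2 ** g i1 ** matrix_inv (g i2)) = inverse (m o1) *s v o1" using ev[OF S(3)] G by simp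
        show "v o2 = k2 *s v i2" by (rule k2)
        show "v o1 = k1 *s (v i1 v* matrix_inv (g i2))" using z(2) k1 vm_smult by simp
        show "uL = g i1 *v uT" "uB = g i2 *v uL" by (rule uu)+
        show "uR = g i2 *v uT" using uo2 G by simp
        show "uT$1 \<noteq> 0" "uL$1 \<noteq> 0" "uB$1 \<noteq> 0" "uR$1 \<noteq> 0" by (rule nzu)+
        show "v i1 $ 2 \<noteq> 0" "v i2 $ 2 \<noteq> 0" using v2nz S by auto
        show "v o1 \<noteq> 0" "v o2 \<noteq> 0" using vL S by auto
        show "rowcol (v i1) uT \<noteq> 0" "rowcol (v i2) uL \<noteq> 0" "rowcol (v o2) uT \<noteq> 0" by (rule nzr)+
      qed (rule da db)+
      show ?thesis using H False unfolding Let_def i1_def i2_def o1_def o2_def by simp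
    qed
  qed
qed

end
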